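(* Let $\mathcal{X}\in\mathbb{IR}^n$ be a box, $w\in\mathbb{R}^n_{>0}$, and let $f=[f_k]:\mathbb{R}^n\to\mathbb{R}^n$ and $g_p=[g_{p,k}]:\mathbb{R}^n\to\mathbb{R}^n$ ($p\in\{1,\dots,d\}$) be functions such that for every $k\in\{1,\dots,n\}$ and $p\in\{1,\dots,d\}$, $f_k$ and $g_{p,k}$ are Lipschitz on $\mathcal{X}$ with respect to $\|\cdot\|_w$, with Lipschitz constants $L^w_{f_k}\le \overline{f}_k$ and $L^w_{g_{p,k}}\le \overline{g}_{p,k}$ for given numbers $\overline{f}_k,\overline{g}_{p,k}\in\mathbb{R}_+$. Let $\mathscr{E}_j=\{(x^i,C_{\mathcal{F}^i},C_{\mathcal{G}^i})\}_{i=0}^{j-1}$ be a finite set with $x^i\in\mathcal{X}$, $C_{\mathcal{F}^i}=[C_{\mathcal{F}^i_k}]\in\mathbb{IR}^n$ and $C_{\mathcal{G}^i}=[C_{\mathcal{G}^i_{p,k}}]\in\mathbb{IR}^{d\times n}$ satisfying $f_k(x^i)\in C_{\mathcal{F}^i_k}$ and $g_{p,k}(x^i)\in C_{\mathcal{G}^i_{p,k}}$ for all $i$, $p\in\{1,\dots,d\}$, $k\in\{1,\dots,n\}$. Let $\boldsymbol{\eta}^w:\mathbb{IR}^n\to\mathbb{IR}$ be any interval extension of the weighted norm $\|\cdot\|_w$, i.e. $\boldsymbol{\eta}^w(\mathcal{B})\supseteq\{\|y\|_w: y\in\mathcal{B}\}$ for every $\mathcal{B}\in\mathbb{IR}^n$.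 Define interval-valued functions $\boldsymbol{f}=[\boldsymbol{f}_k]$ and $\boldsymbol{g}_p=[\boldsymbol{g}_{p,k}]$ on $\mathbb{IR}^n$ by $$\boldsymbol{f}_k(\mathcal{A})=\bigcap_{i=0}^{j-1}\Big(C_{\mathcal{F}^i_k}+[-1,1]\,\overline{f}_k\,\boldsymbol{\eta}^w(\mathcal{A}-x^i)\Big),\qquad \boldsymbol{g}_{p,k}(\mathcal{A})=\bigcap_{i=0}^{j-1}\Big(C_{\mathcal{G}^i_{p,k}}+[-1,1]\,\overline{g}_{p,k}\,\boldsymbol{\eta}^w(\mathcal{A}-x^i)\Big).$$ Then for every interval $\mathcal{A}\in\mathbb{IR}^n$ with $\mathcal{A}\subseteq\mathcal{X}$, $\{f_k(x):x\in\mathcal{A}\}\subseteq\boldsymbol{f}_k(\mathcal{A})$ and $\{g_{p,k}(x):x\in\mathcal{A}\}\subseteq\boldsymbol{g}_{p,k}(\mathcal{A})$ for all $k\in\{1,\dots,n\}$, $p\in\{1,\dots,d\}$.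
   Context: $\mathbb{IR}$ denotes the set of closed bounded real intervals $[a,b]$, $a\le b$; $\mathbb{IR}^n$ and $\mathbb{IR}^{d\times n}$ denote interval vectors and interval matrices (componentwise). Arithmetic on intervals is standard interval arithmetic: $\mathcal{A}+\mathcal{B}=\{a+b\}$, $\mathcal{A}\mathcal{B}=\{ab\}$, etc., with $a\in\mathcal{A},b\in\mathcal{B}$, and a real number is identified with a degenerate interval; for an interval vector $\mathcal{A}$ and point $x$, $\mathcal{A}-x$ is the componentwise interval difference. Intersections and inclusions of interval vectors/matrices are componentwise. The weighted norm is $\|x\|_w=\sqrt{\sum_{i=1}^n(w_ix_i)^2}$, and the Lipschitz constant of $h:\mathcal{X}\to\mathbb{R}$ with respect to it is $L^w_h=\sup\{L: |h(x)-h(y)|\le L\|x-y\|_w,\ x,y\in\mathcal{X}, x\ne y\}$. *)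

theory Defs
  imports "HOL-Analysis.Analysis"
begin

definition is_ival :: "real set \<Rightarrow> bool" where
  "is_ival S \<longleftrightarrow> (\<exists>a b. a \<le> b \<and> S = {a..b})"

definition is_ivec :: "('n \<Rightarrow> real set) \<Rightarrow> bool" where
  "is_ivec B \<longleftrightarrow> (\<forall>k. is_ival (B k))"

definition box_pts :: "('n \<Rightarrow> real set) \<Rightarrow> (real ^ 'n) set" where
  "box_pts B = {x. \<forall>k. x $ k \<in> B k}"

definition wnorm :: "real ^ 'n \<Rightarrow> real ^ 'n \<Rightarrow> real" where
  "wnorm w x = sqrt (\<Sum>i\<in>UNIV. (w $ i * x $ i)^2)"

definition ivec_minus :: "('n \<Rightarrow> real set) \<Rightarrow> real ^ 'n \<Rightarrow> ('n \<Rightarrow> real set)" where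
  "ivec_minus A x = (\<lambda>k. (\<lambda>a. a - x $ k) ` A k)"

text \<open>Interval arithmetic C + [-1,1] * c * E (interval arithmetic = set arithmetic on intervals).\<close>
definition ival_enclose :: "real set \<Rightarrow> real \<Rightarrow> real set \<Rightarrow> real set" where
  "ival_enclose C c E = {y + s * c * e | y s e. y \<in> C \<and> s \<in> {-1..1} \<and> e \<in> E}"

definition is_wnorm_ext :: "real ^ 'n \<Rightarrow> (('n \<Rightarrow> real set) \<Rightarrow> real set) \<Rightarrow> bool" where
  "is_wnorm_ext w eta \<longleftrightarrow>
     (\<forall>B. is_ivec B \<longrightarrow> is_ival (eta B) \<and> {wnorm w y | y. y \<in> box_pts B} \<subseteq> eta B)"

definition wlip_on :: "real ^ 'n \<Rightarrow> (real ^ 'n) set \<Rightarrow> real \<Rightarrow> (real ^ 'n \<Rightarrow> real) \<Rightarrow> bool" where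
  "wlip_on w X L h \<longleftrightarrow> (\<forall>x\<in>X. \<forall>y\<in>X. \<bar>h x - h y\<bar> \<le> L * wnorm w (x - y))"

definition lip_encl ::
  "nat \<Rightarrow> (nat \<Rightarrow> real ^ 'n) \<Rightarrow> (nat \<Rightarrow> real set) \<Rightarrow> real \<Rightarrow>
   (('n \<Rightarrow> real set) \<Rightarrow> real set) \<Rightarrow> ('n \<Rightarrow> real set) \<Rightarrow> real set" where
  "lip_encl j xs C c eta A = (\<Inter>i\<in>{..<j}. ival_enclose (C i) c (eta (ivec_minus A (xs i))))"

end

theory Submission
  imports Defs
begin

lemma ivec_minus_ivec:
  assumes "is_ivec A" shows "is_ivec (ivec_minus A x)"
proof -
  have "is_ival ((\<lambda>a. a - x $ k) ` A k)" for k
  proof -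
    obtain a b where ab: "a \<le> b" "A k = {a..b}" using assms unfolding is_ivec_def is_ival_def by blast
    have "(\<lambda>t. t - x $ k) ` {a..b} = {a - x $ k..b - x $ k}"
      using image_diff_atLeastAtMost[of "x $ k" a b] by simp
    thus ?thesis using ab unfolding is_ival_def by auto
  qed
  thus ?thesis unfolding is_ivec_def ivec_minus_def by blast
qed

lemma encl_one:
  fixes h :: "real ^ 'n \<Rightarrow> real"
  assumes lip: "wlip_on w (box_pts X) c h" and c: "c \<ge> 0"
    and xi: "xi \<in> box_pts X" and C: "h xi \<in> C"
    and eta: "is_wnorm_ext w eta" and A: "is_ivec A" and sub: "\<forall>k. A k \<subseteq> X k"
    and x: "x \<in> box_pts A"
  shows "h x \<in> ival_enclose C c (eta (ivec_minus A xi))"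
proof -
  have xX: "x \<in> box_pts X" using x sub unfolding box_pts_def by blast
  have "x - xi \<in> box_pts (ivec_minus A xi)"
    using x unfolding box_pts_def ivec_minus_def by auto
  hence e: "wnorm w (x - xi) \<in> eta (ivec_minus A xi)"
    using eta ivec_minus_ivec[OF A] unfolding is_wnorm_ext_def by blast
  have le: "\<bar>h x - h xi\<bar> \<le> c * wnorm w (x - xi)" using lip xX xi unfolding wlip_on_def by blast
  define e0 where "e0 = wnorm w (x - xi)"
  show ?thesis
  proof (cases "c * e0 = 0")
    case True
    hence "h x = h xi" using le e0_def by (metis abs_le_zero_iff mult_zero_left mult_zero_right right_minus_eq)
    moreover have "(0::real) \<in> {-1..1}" by simp
    ultimately show ?thesis unfolding ival_enclose_def using C e e0_def
      by (metis (mono_tags, lifting) add.right_neutral mem_Collect_eq mult_zero_left)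
  next
    case False
    define s where "s = (h x - h xi) / (c * e0)"
    have pos: "c * e0 > 0" using False le e0_def by (smt (verit))
    have "\<bar>s\<bar> \<le> 1" unfolding s_def using le pos e0_def by (simp add: abs_divide divide_le_eq_1)
    moreover have "h x = h xi + s * c * e0" unfolding s_def using False by simp
    ultimately have "s \<in> {-1..1}" "h x = h xi + s * c * e0" by auto
    thus ?thesis unfolding ival_enclose_def using C e e0_def by blast
  qed
qed

theorem lemma1:
  fixes X :: "'n::finite \<Rightarrow> real set"
    and w :: "real ^ 'n"
    and f :: "real ^ 'n \<Rightarrow> real ^ 'n"
    and g :: "'d::finite \<Rightarrow> real ^ 'n \<Rightarrow> real ^ 'n"
    and fbar :: "'n \<Rightarrow> real"
    and gbar :: "'d \<Rightarrow> 'n \<Rightarrow> real"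
    and j :: nat
    and xs :: "nat \<Rightarrow> real ^ 'n"
    and CF :: "nat \<Rightarrow> 'n \<Rightarrow> real set"
    and CG :: "nat \<Rightarrow> 'd \<Rightarrow> 'n \<Rightarrow> real set"
    and eta :: "('n \<Rightarrow> real set) \<Rightarrow> real set"
    and A :: "'n \<Rightarrow> real set"
  assumes X_box: "is_ivec X"
    and w_pos: "\<forall>k. w $ k > 0"
    and fbar_nn: "\<forall>k. fbar k \<ge> 0"
    and gbar_nn: "\<forall>p k. gbar p k \<ge> 0"
    and f_lip: "\<forall>k. wlip_on w (box_pts X) (fbar k) (\<lambda>x. f x $ k)"
    and g_lip: "\<forall>p k. wlip_on w (box_pts X) (gbar p k) (\<lambda>x. g p x $ k)"
    and xs_in: "\<forall>i<j. xs i \<in> box_pts X"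
    and CF_ival: "\<forall>i<j. is_ivec (CF i)"
    and CG_ival: "\<forall>i<j. \<forall>p. is_ivec (CG i p)"
    and CF_encl: "\<forall>i<j. \<forall>k. f (xs i) $ k \<in> CF i k"
    and CG_encl: "\<forall>i<j. \<forall>p k. g p (xs i) $ k \<in> CG i p k"
    and eta_ext: "is_wnorm_ext w eta"
    and A_ival: "is_ivec A"
    and A_sub: "\<forall>k. A k \<subseteq> X k"
  shows "(\<forall>k. (\<lambda>x. f x $ k) ` box_pts A \<subseteq> lip_encl j xs (\<lambda>i. CF i k) (fbar k) eta A)
       \<and> (\<forall>p k. (\<lambda>x. g p x $ k) ` box_pts A \<subseteq> lip_encl j xs (\<lambda>i. CG i p k) (gbar p k) eta A)"
proof -
  have "\<forall>k. (\<lambda>x. f x $ k) ` box_pts A \<subseteq> lip_encl j xs (\<lambda>i. CF i k) (fbar k) eta A"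
  proof (intro allI subsetI)
    fix k y assume "y \<in> (\<lambda>x. f x $ k) ` box_pts A"
    then obtain x where x: "x \<in> box_pts A" "y = f x $ k" by blast
    show "y \<in> lip_encl j xs (\<lambda>i. CF i k) (fbar k) eta A"
      unfolding lip_encl_def
    proof (rule INT_I)
      fix i assume "i \<in> {..<j}"
      then show "y \<in> ival_enclose (CF i k) (fbar k) (eta (ivec_minus A (xs i)))"
        using encl_one[of w X "fbar k" "\<lambda>x. f x $ k" "xs i" "CF i k" eta A x] f_lip fbar_nn xs_in CF_encl eta_ext A_ival A_sub x
        by simp
    qed
  qed
  moreover have "\<forall>p k. (\<lambda>x. g p x $ k) ` box_pts A \<subseteq> lip_encl j xs (\<lambda>i. CG i p k) (gbar p k) eta A"
  proof (intro allI subsetI)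
    fix p k y assume "y \<in> (\<lambda>x. g p x $ k) ` box_pts A"
    then obtain x where x: "x \<in> box_pts A" "y = g p x $ k" by blast
    show "y \<in> lip_encl j xs (\<lambda>i. CG i p k) (gbar p k) eta A"
      unfolding lip_encl_def
    proof (rule INT_I)
      fix i assume "i \<in> {..<j}"
      then show "y \<in> ival_enclose (CG i p k) (gbar p k) (eta (ivec_minus A (xs i)))"
        using encl_one[of w X "gbar p k" "\<lambda>x. g p x $ k" "xs i" "CG i p k" eta A x] g_lip gbar_nn xs_in CG_encl eta_ext A_ival A_sub x
        by simp
    qed
  qed
  ultimately show ?thesis by blast
qed

end
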